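(* For every $\epsilon>0$ there is $C_\epsilon$ (independent of $w$, $b$, $q$, $a$) such that for all $b\in Z(W)$, $q\ge1$ and $a$ coprime to $q$, $|S(q,a)|\le C_\epsilon q^{1/2+\epsilon}$. Moreover $S(q,a)=0$ whenever $\gcd(q,W)\nmid 2$ or $q=2$.
   Context: $W=8\prod_{2<p<w}p$ (product over primes) for a real parameter $w\ge3$. $[q]=\{1,\dots,q\}$, $[q]^*=\{a\in[q]:\gcd(a,q)=1\}$. $Z(W)=\{b\in[W]^*:b\equiv h^2\pmod W\text{ for some } h\}$; $H(b)=\{h\in[W]^*:h^2\equiv b\pmod W\}$, $H=|H(b)|$. $e(x)=e^{2\pi ix}$. $S(q,a)=\frac1H\sum_{h\in H(b)}e\big(\frac{(h^2-b)a}{qW}\big)\sum_{l\in[q],\ \gcd(Wl+h,qW)=1}e\big(\frac{(Wl^2+2hl)a}{q}\big)$. *)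

theory Defs
  imports "HOL-Analysis.Analysis" "HOL-Number_Theory.Number_Theory"
begin

definition ee :: "real \<Rightarrow> complex" where
  "ee x = exp (2 * pi * \<i> * complex_of_real x)"

definition WW :: "real \<Rightarrow> int" where
  "WW w = 8 * (\<Prod>p\<in>{p::nat. prime p \<and> 2 < p \<and> real p < w}. int p)"

definition Zset :: "int \<Rightarrow> int set" where
  "Zset W = {b \<in> {1..W}. coprime b W \<and> (\<exists>h::int. [h^2 = b] (mod W))}"

definition Hset :: "int \<Rightarrow> int \<Rightarrow> int set" where
  "Hset W b = {h \<in> {1..W}. coprime h W \<and> [h^2 = b] (mod W)}"

definition Ssum :: "int \<Rightarrow> int \<Rightarrow> int \<Rightarrow> int \<Rightarrow> complex" where
  "Ssum W b q a = (1 / of_nat (card (Hset W b))) *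
     (\<Sum>h\<in>Hset W b. ee (of_int ((h^2 - b) * a) / of_int (q * W)) *
        (\<Sum>l\<in>{l\<in>{1..q}. gcd (W * l + h) (q * W) = 1}.
            ee (of_int ((W * l^2 + 2 * h * l) * a) / of_int q)))"

end

theory Submission
  imports Defs
begin

lemma ee_add: "ee (x + y) = ee x * ee y"
  unfolding ee_def by (simp add: distrib_left exp_add)

lemma ee_int: "ee (of_int n) = 1"
  unfolding ee_def using exp_2pi_1_int[of n] by (simp add: mult_ac)

lemma ee_eq_1: "ee x = 1 \<longleftrightarrow> x \<in> \<int>"
proof
  assume "ee x = 1"
  then obtain n where "2 * pi * x = real_of_int (2*n) * pi"
    unfolding ee_def exp_eq_1 by auto
  then have "x = of_int n" by simp
  then show "x \<in> \<int>" by simp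
next
  assume "x \<in> \<int>" then obtain n where "x = of_int n" by (auto elim: Ints_cases)
  then show "ee x = 1" by (simp add: ee_int)
qed

lemma norm_ee [simp]: "norm (ee x) = 1"
  unfolding ee_def by (simp add: norm_exp_eq_Re)

lemma cnj_ee: "cnj (ee x) = ee (-x)"
  unfolding ee_def by (simp add: exp_cnj)

lemma ee_power: "ee x ^ n = ee (of_nat n * x)"
  unfolding ee_def by (simp add: exp_of_nat_mult[symmetric] mult_ac)

lemma ee_plus_int: "ee (x + of_int n) = ee x"
  by (simp add: ee_add ee_int)

lemma ee_cong:
  fixes x y n :: int
  assumes "[x = y] (mod n)" "n \<noteq> 0"
  shows "ee (of_int x / of_int n) = ee (of_int y / of_int n)"
proof -
  from assms(1) obtain t where "x = y + n * t"
    by (metis cong_iff_lin cong_sym)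
  then have "of_int x / of_int n = of_int y / of_int n + (of_int t :: real)"
    using assms(2) by (simp add: field_simps)
  then show ?thesis by (simp add: ee_plus_int)
qed

lemma root_sum:
  fixes n :: nat and k :: int
  assumes "n > 0"
  shows "(\<Sum>j<n. ee (of_nat j * of_int k / of_nat n)) = (if int n dvd k then of_nat n else 0)"
proof (cases "int n dvd k")
  case True
  then obtain t where "k = int n * t" by auto
  have "of_nat j * of_int k / of_nat n = (of_int (int j * t) :: real)" for j
    using assms \<open>k = int n * t\<close> by simp
  then have "\<And>j. ee (of_nat j * of_int k / of_nat n) = 1"
    by (metis ee_int)
  then show ?thesis using True by simp
next
  case False
  define z where "z = ee (of_int k / of_nat n)"
  have zj: "ee (of_nat j * of_int k / of_nat n) = z ^ j" for j
    unfolding z_def ee_power by simp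
  have "z \<noteq> 1"
  proof
    assume "z = 1"
    then have "of_int k / of_nat n \<in> (\<int>::real set)" unfolding z_def ee_eq_1 .
    then obtain t where "of_int k / of_nat n = (of_int t :: real)" by (auto elim: Ints_cases)
    then have "of_int k = (of_int (int n * t) :: real)" using assms by (simp add: field_simps)
    then have "k = int n * t" by (simp only: of_int_eq_iff)
    then show False using False by auto
  qed
  have "z ^ n = 1" unfolding z_def ee_power using assms
    by (simp add: ee_int)
  have "(\<Sum>j<n. z ^ j) = (z ^ n - 1) / (z - 1)"
    using \<open>z \<noteq> 1\<close> by (simp add: geometric_sum)
  then show ?thesis using False \<open>z ^ n = 1\<close> by (simp add: zj)
qed

lemma gauss_sq:
  fixes n :: nat and k :: int
  assumes n: "n > 0"
  shows "cmod (\<Sum>y<n. ee (of_int (k * int y ^ 2) / of_nat n)) ^ 2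
           \<le> real n * real (card {t. t < n \<and> int n dvd 2 * k * int t})"
proof -
  define g where "g y = ee (of_int (k * int y ^ 2) / of_nat n)" for y
  define F where "F = (\<Sum>y<n. g y)"
  have gmod: "g (y mod n) = g y" for y
    unfolding g_def using n
    by (intro ee_cong[where n="int n", simplified]) (auto simp: of_nat_mod cong_def, metis mod_mult_right_eq power_mod)
  have key: "g (z + t) * cnj (g z) = ee (of_int (k * int t ^ 2) / of_nat n) *
              ee (of_nat z * of_int (2 * k * int t) / of_nat n)" for z t
  proof -
    have "g (z + t) * cnj (g z) = ee (of_int (k * int (z+t) ^ 2) / of_nat n - of_int (k * int z ^ 2) / of_nat n)"
      unfolding g_def cnj_ee by (simp add: ee_add[symmetric])
    also have "of_int (k * int (z+t) ^ 2) / of_nat n - of_int (k * int z ^ 2) / of_nat n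
        = of_int (k * int t ^ 2) / of_nat n + of_nat z * of_int (2 * k * int t) / (of_nat n :: real)"
      using n by (simp add: field_simps power2_eq_square)
    finally show ?thesis by (simp add: ee_add)
  qed
  have inner: "(\<Sum>y<n. g y * cnj (g z)) =
      (\<Sum>t<n. ee (of_int (k * int t ^ 2) / of_nat n) * ee (of_nat z * of_int (2 * k * int t) / of_nat n))"
    if "z < n" for z
  proof -
    have bij: "bij_betw (\<lambda>t. (z + t) mod n) {..<n} {..<n}"
    proof (rule bij_betw_byWitness[where f'="\<lambda>y. (y + (n - z)) mod n"])
      show "\<forall>t\<in>{..<n}. (((z + t) mod n) + (n - z)) mod n = t"
      proof
        fix t assume "t \<in> {..<n}"
        have "(((z + t) mod n) + (n - z)) mod n = (z + t + (n - z)) mod n" by (simp add: mod_add_left_eq)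
        also have "z + t + (n - z) = t + n" using that by simp
        finally show "(((z + t) mod n) + (n - z)) mod n = t" using \<open>t \<in> {..<n}\<close> by simp
      qed
      show "\<forall>y\<in>{..<n}. (z + (y + (n - z)) mod n) mod n = y"
      proof
        fix y assume "y \<in> {..<n}"
        have "(z + (y + (n - z)) mod n) mod n = (z + (y + (n - z))) mod n" by (simp add: mod_add_right_eq)
        also have "z + (y + (n - z)) = y + n" using that by simp
        finally show "(z + (y + (n - z)) mod n) mod n = y" using \<open>y \<in> {..<n}\<close> by simp
      qed
      show "(\<lambda>t. (z + t) mod n) ` {..<n} \<subseteq> {..<n}" using n by auto
      show "(\<lambda>y. (y + (n - z)) mod n) ` {..<n} \<subseteq> {..<n}" using n by auto
    qed
    have "(\<Sum>y<n. g y * cnj (g z)) = (\<Sum>t<n. g ((z + t) mod n) * cnj (g z))"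
      using sum.reindex_bij_betw[OF bij, of "\<lambda>y. g y * cnj (g z)"] by simp
    also have "\<dots> = (\<Sum>t<n. g (z + t) * cnj (g z))" by (simp add: gmod)
    finally show ?thesis by (simp add: key)
  qed
  have "F * cnj F = (\<Sum>z<n. \<Sum>y<n. g y * cnj (g z))"
    unfolding F_def by (simp add: sum_product sum_distrib_left sum_distrib_right cnj_sum)
  also have "\<dots> = (\<Sum>z<n. \<Sum>t<n. ee (of_int (k * int t ^ 2) / of_nat n) * ee (of_nat z * of_int (2 * k * int t) / of_nat n))"
    by (rule sum.cong) (auto simp: inner)
  also have "\<dots> = (\<Sum>t<n. ee (of_int (k * int t ^ 2) / of_nat n) * (\<Sum>z<n. ee (of_nat z * of_int (2 * k * int t) / of_nat n)))"
    by (subst sum.swap) (simp add: sum_distrib_left)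
  also have "\<dots> = (\<Sum>t<n. ee (of_int (k * int t ^ 2) / of_nat n) * (if int n dvd 2 * k * int t then of_nat n else 0))"
    by (rule sum.cong[OF refl]) (simp only: root_sum[OF n])
  finally have eq: "F * cnj F = \<dots>" .
  have "cmod F ^ 2 = cmod (F * cnj F)" by (simp add: norm_mult power2_eq_square)
  also have "\<dots> \<le> (\<Sum>t<n. cmod (ee (of_int (k * int t ^ 2) / of_nat n) * (if int n dvd 2 * k * int t then of_nat n else 0)))"
    unfolding eq by (rule norm_sum)
  also have "\<dots> = (\<Sum>t<n. (if int n dvd 2 * k * int t then real n else 0))"
    by (rule sum.cong) (auto simp: norm_mult)
  also have "\<dots> = real n * real (card {t. t < n \<and> int n dvd 2 * k * int t})"
    by (simp add: sum.If_cases Int_def lessThan_def conj_commute)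
  finally show ?thesis unfolding F_def g_def .
qed

lemma card_dvd_le:
  fixes n d :: nat
  assumes n: "n > 0" and d: "d > 0"
  shows "card {t. t < n \<and> n dvd d * t} \<le> d"
proof -
  define g where "g = gcd n d"
  define m where "m = n div g"
  define d' where "d' = d div g"
  have g0: "g > 0" using n unfolding g_def by simp
  have nm: "n = m * g" unfolding m_def g_def by simp
  have dd: "d = d' * g" unfolding d'_def g_def by simp
  have cop: "coprime m d'" unfolding m_def d'_def g_def using div_gcd_coprime n by blast
  have sub: "{t. t < n \<and> n dvd d * t} \<subseteq> (\<lambda>j. m * j) ` {..<g}"
  proof
    fix t assume "t \<in> {t. t < n \<and> n dvd d * t}"
    then have t: "t < n" "n dvd d * t" by auto
    then have "m * g dvd (d' * t) * g" using nm dd by (simp add: mult_ac)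
    then have "m dvd d' * t" using g0 by (simp add: dvd_mult_cancel2)
    then have "m dvd t" using cop by (simp add: coprime_dvd_mult_right_iff)
    then obtain j where j: "t = m * j" by auto
    have "m * j < m * g" using t(1) nm j by simp
    then have "j < g" by (simp add: mult_less_cancel1)
    then show "t \<in> (\<lambda>j. m * j) ` {..<g}" using j by auto
  qed
  have "card {t. t < n \<and> n dvd d * t} \<le> card ((\<lambda>j. m * j) ` {..<g})"
    by (rule card_mono[OF _ sub]) simp
  also have "\<dots> \<le> card {..<g}" by (rule card_image_le) simp
  also have "\<dots> \<le> d" unfolding g_def using d by simp
  finally show ?thesis .
qed

lemma base_bound:
  fixes q d :: nat and c :: int
  assumes q: "q > 0" and dq: "d dvd q" and oq: "odd q" and cq: "coprime c (int q)"
  shows "cmod (\<Sum>x\<in>{x. x < q \<and> d dvd x}. ee (of_int (c * int x ^ 2) / of_nat q)) \<le> sqrt q"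
proof -
  obtain n where qn: "q = d * n" using dq by auto
  have d0: "d > 0" and n0: "n > 0" using q qn by auto
  have set_eq: "{x. x < q \<and> d dvd x} = (\<lambda>y. d * y) ` {..<n}"
  proof
    show "{x. x < q \<and> d dvd x} \<subseteq> (\<lambda>y. d * y) ` {..<n}"
    proof
      fix x assume "x \<in> {x. x < q \<and> d dvd x}"
      then obtain y where "x = d * y" "d * y < d * n" using qn by auto
      then show "x \<in> (\<lambda>y. d * y) ` {..<n}" by auto
    qed
    show "(\<lambda>y. d * y) ` {..<n} \<subseteq> {x. x < q \<and> d dvd x}" using qn d0 by auto
  qed
  have inj: "inj_on (\<lambda>y. d * y) {..<n}" using d0 by (auto simp: inj_on_def)
  have "(\<Sum>x\<in>{x. x < q \<and> d dvd x}. ee (of_int (c * int x ^ 2) / of_nat q))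
      = (\<Sum>y<n. ee (of_int (c * int (d * y) ^ 2) / of_nat q))"
    unfolding set_eq by (simp add: sum.reindex[OF inj])
  also have "\<dots> = (\<Sum>y<n. ee (of_int ((c * int d) * int y ^ 2) / of_nat n))"
  proof (rule sum.cong[OF refl])
    fix y
    have "(of_int (c * int (d * y) ^ 2) / of_nat q :: real) = of_int ((c * int d) * int y ^ 2) / of_nat n"
      using d0 n0 qn by (simp add: field_simps power2_eq_square)
    then show "ee (of_int (c * int (d * y) ^ 2) / of_nat q) = ee (of_int ((c * int d) * int y ^ 2) / of_nat n)"
      by simp
  qed
  finally have eq: "(\<Sum>x\<in>{x. x < q \<and> d dvd x}. ee (of_int (c * int x ^ 2) / of_nat q))
      = (\<Sum>y<n. ee (of_int ((c * int d) * int y ^ 2) / of_nat n))" .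
  have cardT: "card {t. t < n \<and> int n dvd 2 * (c * int d) * int t} \<le> d"
  proof -
    have cop: "coprime (int n) (2 * c)"
    proof -
      have "odd n" using oq qn by simp
      then have "coprime (int n) 2" by (simp add: coprime_commute)
      moreover have "coprime (int n) c"
        using cq qn by (metis coprime_commute coprime_mult_right_iff of_nat_mult)
      ultimately show ?thesis by simp
    qed
    have "{t. t < n \<and> int n dvd 2 * (c * int d) * int t} \<subseteq> {t. t < n \<and> n dvd d * t}"
    proof
      fix t assume "t \<in> {t. t < n \<and> int n dvd 2 * (c * int d) * int t}"
      then have t: "t < n" "int n dvd (2 * c) * (int d * int t)" by (auto simp: mult_ac)
      then have "int n dvd int d * int t" using cop by (simp add: coprime_dvd_mult_right_iff)
      then have "n dvd d * t" by (metis of_nat_dvd_iff of_nat_mult)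
      then show "t \<in> {t. t < n \<and> n dvd d * t}" using t by simp
    qed
    then have "card {t. t < n \<and> int n dvd 2 * (c * int d) * int t} \<le> card {t. t < n \<and> n dvd d * t}"
      by (intro card_mono) auto
    also have "\<dots> \<le> d" by (rule card_dvd_le[OF n0 d0])
    finally show ?thesis .
  qed
  have "cmod (\<Sum>y<n. ee (of_int ((c * int d) * int y ^ 2) / of_nat n)) ^ 2
      \<le> real n * real (card {t. t < n \<and> int n dvd 2 * (c * int d) * int t})"
    by (rule gauss_sq[OF n0])
  also have "\<dots> \<le> real n * real d" using cardT by (intro mult_left_mono) auto
  also have "\<dots> = real q" using qn by simp
  finally show ?thesis unfolding eq by (rule real_le_rsqrt)
qed

lemma incl_excl_bound:
  fixes q :: nat and c :: int
  assumes q: "q > 0" and oq: "odd q" and cq: "coprime c (int q)"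
  assumes fin: "finite P" and Pp: "\<forall>p\<in>P. prime p \<and> p dvd q"
  shows "\<forall>d. d dvd q \<and> (\<forall>p\<in>P. \<not> p dvd d) \<longrightarrow>
     cmod (\<Sum>x\<in>{x. x < q \<and> d dvd x \<and> (\<forall>p\<in>P. \<not> p dvd x)}. ee (of_int (c * int x ^ 2) / of_nat q))
       \<le> 2 ^ card P * sqrt q"
  using fin Pp
proof (induction P rule: finite_induct)
  case empty
  then show ?case using base_bound[OF q _ oq cq] by simp
next
  case (insert p P)
  let ?f = "\<lambda>x::nat. ee (of_int (c * int x ^ 2) / of_nat q)"
  let ?S = "\<lambda>d P. {x. x < q \<and> d dvd x \<and> (\<forall>p\<in>P. \<not> p dvd x)}"
  have PP: "\<forall>p\<in>P. prime p \<and> p dvd q" using insert.prems by simp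
  note IH0 = insert.IH[OF PP]
  have IH: "\<And>d. d dvd q \<Longrightarrow> (\<forall>p\<in>P. \<not> p dvd d) \<Longrightarrow> cmod (sum ?f (?S d P)) \<le> 2 ^ card P * sqrt q"
    using IH0 by simp
  have pp: "prime p" "p dvd q" using insert.prems by auto
  show ?case
  proof (intro allI impI)
    fix d assume d: "d dvd q \<and> (\<forall>p'\<in>insert p P. \<not> p' dvd d)"
    have cdp: "coprime d p" using d pp prime_imp_coprime[of p d] coprime_commute by blast
    have dpq: "d * p dvd q" by (rule divides_mult) (use d pp cdp in auto)
    have dpP: "\<forall>p'\<in>P. \<not> p' dvd d * p"
    proof
      fix p' assume "p' \<in> P"
      then have "prime p'" "\<not> p' dvd d" "p' \<noteq> p" using PP d insert.hyps(2) by auto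
      then show "\<not> p' dvd d * p" using pp prime_dvd_mult_iff[of p' d p] primes_dvd_imp_eq[of p' p]
        by auto
    qed
    have seteq: "?S d (insert p P) = ?S d P - ?S (d * p) P"
      unfolding set_eq_iff
    proof
      fix x
      have e: "(d * p dvd x) = (d dvd x \<and> p dvd x)"
      proof
        assume "d dvd x \<and> p dvd x" then show "d * p dvd x" using divides_mult[OF _ _ cdp] by blast
      next
        assume h: "d * p dvd x" show "d dvd x \<and> p dvd x" using dvd_mult_left[OF h] dvd_mult_right[OF h] by simp
      qed
      show "x \<in> ?S d (insert p P) \<longleftrightarrow> x \<in> ?S d P - ?S (d * p) P" by (auto simp: e)
    qed
    have sub: "?S (d * p) P \<subseteq> ?S d P"
    proof
      fix x assume "x \<in> ?S (d * p) P" then show "x \<in> ?S d P" using dvd_mult_left[of d p x] by simp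
    qed
    have "sum ?f (?S d (insert p P)) = sum ?f (?S d P) - sum ?f (?S (d * p) P)"
      unfolding seteq by (rule sum_diff) (use sub in auto)
    then have "cmod (sum ?f (?S d (insert p P))) \<le> cmod (sum ?f (?S d P)) + cmod (sum ?f (?S (d * p) P))"
      by (simp add: norm_triangle_ineq4)
    also have "\<dots> \<le> 2 ^ card P * sqrt q + 2 ^ card P * sqrt q"
      using IH[of d] IH[OF dpq dpP] d by (intro add_mono) auto
    also have "\<dots> = 2 ^ card (insert p P) * sqrt q" using insert by simp
    finally show "cmod (sum ?f (?S d (insert p P))) \<le> 2 ^ card (insert p P) * sqrt q" .
  qed
qed

lemma coprime_nat_iff_primes:
  fixes x q :: nat
  shows "coprime x q \<longleftrightarrow> (\<forall>p\<in>{p. prime p \<and> p dvd q}. \<not> p dvd x)"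
proof
  assume c: "coprime x q"
  show "\<forall>p\<in>{p. prime p \<and> p dvd q}. \<not> p dvd x"
  proof (intro ballI notI)
    fix p assume p: "p \<in> {p. prime p \<and> p dvd q}" and px: "p dvd x"
    then have "p dvd gcd x q" by simp
    then have "p dvd 1" using c by simp
    then show False using p by simp
  qed
next
  assume H: "\<forall>p\<in>{p. prime p \<and> p dvd q}. \<not> p dvd x"
  show "coprime x q"
  proof (rule ccontr)
    assume "\<not> coprime x q"
    then have "gcd x q \<noteq> 1" using coprime_iff_gcd_eq_1 by blast
    then obtain p where p: "prime p" "p dvd gcd x q" using prime_factor_nat by blast
    then have "p dvd x" "p dvd q" by auto
    then show False using H p(1) by simp
  qed
qed

lemma unit_sum_bound:
  fixes q :: nat and c :: int
  assumes q: "q > 0" and oq: "odd q" and cq: "coprime c (int q)"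
  shows "cmod (\<Sum>x\<in>{x. x < q \<and> coprime x q}. ee (of_int (c * int x ^ 2) / of_nat q))
       \<le> 2 ^ card {p. prime p \<and> p dvd q} * sqrt q"
proof -
  define P where "P = {p. prime p \<and> p dvd q}"
  have "P \<subseteq> {..q}" using q unfolding P_def by (auto dest: dvd_imp_le)
  then have fin: "finite P" by (rule finite_subset) simp
  have Pp: "\<forall>p\<in>P. prime p \<and> p dvd q" unfolding P_def by simp
  have one: "(1::nat) dvd q \<and> (\<forall>p\<in>P. \<not> p dvd 1)" unfolding P_def using not_prime_1 by auto
  have seq: "{x. x < q \<and> coprime x q} = {x. x < q \<and> 1 dvd x \<and> (\<forall>p\<in>P. \<not> p dvd x)}"
    unfolding P_def by (rule Collect_cong) (simp only: coprime_nat_iff_primes one_dvd simp_thms)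
  have H: "\<forall>d. d dvd q \<and> (\<forall>p\<in>P. \<not> p dvd d) \<longrightarrow>
     cmod (\<Sum>x\<in>{x. x < q \<and> d dvd x \<and> (\<forall>p\<in>P. \<not> p dvd x)}. ee (of_int (c * int x ^ 2) / of_nat q))
       \<le> 2 ^ card P * sqrt q"
    by (rule incl_excl_bound[OF q oq cq fin Pp])
  have "cmod (\<Sum>x\<in>{x. x < q \<and> 1 dvd x \<and> (\<forall>p\<in>P. \<not> p dvd x)}. ee (of_int (c * int x ^ 2) / of_nat q))
       \<le> 2 ^ card P * sqrt q"
    using H one by blast
  then show ?thesis unfolding seq P_def .
qed

lemma prod_primes_dvd:
  fixes q :: nat
  assumes "finite L" "\<forall>p\<in>L. prime p \<and> p dvd q"
  shows "prod id L dvd q"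
  using assms
proof (induction L rule: finite_induct)
  case empty then show ?case by simp
next
  case (insert p L)
  have L: "\<forall>p\<in>L. prime p \<and> p dvd q" using insert.prems by simp
  have pr: "prime p" "p dvd q" using insert.prems by auto
  have "\<not> p dvd prod id L"
  proof
    assume "p dvd prod id L"
    then obtain p' where "p' \<in> L" "p dvd p'"
      using prime_dvd_prod_iff[OF insert.hyps(1) pr(1)] by auto
    moreover then have "prime p'" using L by simp
    ultimately have "p = p'" using pr(1) primes_dvd_imp_eq by blast
    then show False using \<open>p' \<in> L\<close> insert.hyps(2) by simp
  qed
  then have cop: "coprime p (prod id L)" using prime_imp_coprime[OF pr(1)] by blast
  have "p * prod id L dvd q"
    by (rule divides_mult) (use pr insert.IH[OF L] cop in auto)
  then show ?case using insert.hyps by simp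
qed

lemma omega_bound:
  fixes \<epsilon> :: real
  assumes e: "\<epsilon> > 0"
  shows "\<exists>C>0. \<forall>q::nat. q > 0 \<longrightarrow> 2 ^ card {p. prime p \<and> p dvd q} \<le> C * real q powr \<epsilon>"
proof -
  define E where "E = (2::real) powr (1 / \<epsilon>)"
  define N where "N = nat \<lceil>E\<rceil>"
  have "\<forall>q::nat. q > 0 \<longrightarrow> 2 ^ card {p. prime p \<and> p dvd q} \<le> 2 ^ N * real q powr \<epsilon>"
  proof (intro allI impI)
    fix q :: nat assume q: "q > 0"
    define P where "P = {p. prime p \<and> p dvd q}"
    have "P \<subseteq> {..q}" using q unfolding P_def by (auto dest: dvd_imp_le)
    then have fin: "finite P" by (rule finite_subset) simp
    define S where "S = {p\<in>P. real p < E}"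
    define L where "L = {p\<in>P. \<not> real p < E}"
    have PSL: "P = S \<union> L" unfolding S_def L_def by auto
    have finL: "finite L" using fin unfolding L_def by simp
    have "S \<subseteq> {..<N}"
    proof
      fix p assume "p \<in> S"
      then have "real p < E" unfolding S_def by simp
      also have "E \<le> real N"
      proof -
        have E0: "E > 0" unfolding E_def by simp
        have "E \<le> of_int \<lceil>E\<rceil>" by (rule le_of_int_ceiling)
        also have "\<dots> = real N" unfolding N_def using E0 by simp
        finally show ?thesis .
      qed
      finally show "p \<in> {..<N}" by simp
    qed
    then have cS: "card S \<le> N" using card_mono[of "{..<N}" S] by simp
    have cP: "card P \<le> N + card L" using card_Un_le[of S L] PSL cS by simp
    have "(2::real) ^ card L = (\<Prod>p\<in>L. 2)" by simp
    also have "\<dots> \<le> (\<Prod>p\<in>L. real p powr \<epsilon>)"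
    proof (rule prod_mono)
      fix p assume "p \<in> L"
      then have pE: "E \<le> real p" unfolding L_def by simp
      have "(2::real) = E powr \<epsilon>" unfolding E_def using e by (simp add: powr_powr)
      also have "\<dots> \<le> real p powr \<epsilon>" using pE e unfolding E_def by (intro powr_mono2) auto
      finally show "0 \<le> (2::real) \<and> 2 \<le> real p powr \<epsilon>" by simp
    qed
    also have "\<dots> = (\<Prod>p\<in>L. real p) powr \<epsilon>" by (simp add: prod_powr_distrib)
    also have "\<dots> \<le> real q powr \<epsilon>"
    proof (intro powr_mono2)
      have "prod id L dvd q" by (rule prod_primes_dvd[OF finL]) (auto simp: L_def P_def)
      then have "prod id L \<le> q" using q by (rule dvd_imp_le)
      then have "real (prod id L) \<le> real q" by (simp only: of_nat_le_iff)
      moreover have "real (prod id L) = (\<Prod>p\<in>L. real p)" by (simp add: of_nat_prod)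
      ultimately show "(\<Prod>p\<in>L. real p) \<le> real q" by simp
    qed (use e in \<open>auto intro: prod_nonneg\<close>)
    finally have L2: "(2::real) ^ card L \<le> real q powr \<epsilon>" .
    have "(2::real) ^ card P \<le> 2 ^ (N + card L)" using cP by (intro power_increasing) auto
    also have "\<dots> = 2 ^ N * 2 ^ card L" by (simp add: power_add)
    also have "\<dots> \<le> 2 ^ N * real q powr \<epsilon>" using L2 by simp
    finally show "2 ^ card {p. prime p \<and> p dvd q} \<le> 2 ^ N * real q powr \<epsilon>" unfolding P_def .
  qed
  then show ?thesis by (intro exI[of _ "2 ^ N"]) auto
qed

lemma shift_zero:
  fixes N D s :: int and F :: "int \<Rightarrow> complex" and P :: "int \<Rightarrow> bool" and r :: "int \<Rightarrow> int"
  assumes N: "N > 0" and D: "D > 0"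
  and Pshift: "\<And>m j. P m \<Longrightarrow> P ((m + j * s) mod N)"
  and Fmod: "\<And>m. F (m mod N) = F m"
  and Fshift: "\<And>m j. P m \<Longrightarrow> F (m + j * s) = F m * ee (of_int (j * r m) / of_int D)"
  and rnd: "\<And>m. P m \<Longrightarrow> \<not> D dvd r m"
  shows "(\<Sum>m\<in>{m\<in>{0..<N}. P m}. F m) = 0"
proof -
  define M where "M = {m\<in>{0..<N}. P m}"
  have finM: "finite M" unfolding M_def by (rule finite_subset[of _ "{0..<N}"]) auto
  have eqj: "(\<Sum>m\<in>M. F m) = (\<Sum>m\<in>M. F m * ee (of_int (j * r m) / of_int D))" for j :: int
  proof -
    have bij: "bij_betw (\<lambda>m. (m + j * s) mod N) M M"
    proof (rule bij_betw_byWitness[where f'="\<lambda>m. (m + (-j) * s) mod N"])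
      show "\<forall>m\<in>M. ((m + j * s) mod N + (-j) * s) mod N = m"
      proof
        fix m assume "m \<in> M"
        then have "0 \<le> m" "m < N" unfolding M_def by auto
        have "((m + j * s) mod N + (-j) * s) mod N = (m + j * s + (-j) * s) mod N"
          by (rule mod_add_left_eq)
        also have "\<dots> = m mod N" by simp
        also have "\<dots> = m" using \<open>0 \<le> m\<close> \<open>m < N\<close> by simp
        finally show "((m + j * s) mod N + (-j) * s) mod N = m" .
      qed
      show "\<forall>m\<in>M. ((m + (-j) * s) mod N + j * s) mod N = m"
      proof
        fix m assume "m \<in> M"
        then have "0 \<le> m" "m < N" unfolding M_def by auto
        have "((m + (-j) * s) mod N + j * s) mod N = (m + (-j) * s + j * s) mod N"
          by (rule mod_add_left_eq)
        also have "\<dots> = m mod N" by simp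
        also have "\<dots> = m" using \<open>0 \<le> m\<close> \<open>m < N\<close> by simp
        finally show "((m + (-j) * s) mod N + j * s) mod N = m" .
      qed
      show "(\<lambda>m. (m + j * s) mod N) ` M \<subseteq> M"
        using N Pshift unfolding M_def by auto
      show "(\<lambda>m. (m + (-j) * s) mod N) ` M \<subseteq> M"
        using N Pshift[of _ "-j"] unfolding M_def by auto
    qed
    have "(\<Sum>m\<in>M. F m) = (\<Sum>m\<in>M. F ((m + j * s) mod N))"
      using sum.reindex_bij_betw[OF bij, of F] by simp
    also have "\<dots> = (\<Sum>m\<in>M. F (m + j * s))" by (simp only: Fmod)
    also have "\<dots> = (\<Sum>m\<in>M. F m * ee (of_int (j * r m) / of_int D))"
      by (rule sum.cong[OF refl]) (use Fshift M_def in auto)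
    finally show ?thesis .
  qed
  have "of_nat (nat D) * (\<Sum>m\<in>M. F m) = (\<Sum>j<nat D. \<Sum>m\<in>M. F m)" by simp
  also have "\<dots> = (\<Sum>j<nat D. \<Sum>m\<in>M. F m * ee (of_int (int j * r m) / of_int D))"
    by (rule sum.cong[OF refl]) (rule eqj)
  also have "\<dots> = (\<Sum>m\<in>M. F m * (\<Sum>j<nat D. ee (of_nat j * of_int (r m) / of_nat (nat D))))"
    using D by (subst sum.swap) (simp add: sum_distrib_left)
  also have "\<dots> = 0"
  proof (rule sum.neutral, rule ballI)
    fix m assume "m \<in> M"
    then have "\<not> D dvd r m" using rnd unfolding M_def by auto
    then have "\<not> int (nat D) dvd r m" using D by simp
    then show "F m * (\<Sum>j<nat D. ee (of_nat j * of_int (r m) / of_nat (nat D))) = 0"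
      using D by (simp only: root_sum) simp
  qed
  finally have "of_nat (nat D) * (\<Sum>m\<in>M. F m) = 0" .
  then show ?thesis using D unfolding M_def by simp
qed

definition FF :: "int \<Rightarrow> int \<Rightarrow> int \<Rightarrow> int \<Rightarrow> int \<Rightarrow> complex" where
  "FF W b q a m = ee (of_int ((m^2 - b) * a) / of_int (q * W))"

definition LL :: "int \<Rightarrow> int \<Rightarrow> int \<Rightarrow> int set" where
  "LL W q h = {l\<in>{1..q}. gcd (W * l + h) (q * W) = 1}"

lemma coprime_shift:
  fixes m t N :: int
  assumes c: "coprime m N" and d: "N dvd t^2"
  shows "coprime (m + t) N"
proof -
  define g where "g = gcd (m + t) N"
  have gN: "g dvd N" and gmt: "g dvd m + t" unfolding g_def by auto
  have gt: "g dvd t^2" using gN d by (rule dvd_trans)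
  have "g dvd (m + t) * (m - t)" using gmt by simp
  then have "g dvd m^2 - t^2" by (simp add: power2_eq_square algebra_simps)
  then have "g dvd m^2 - t^2 + t^2" using gt by (rule dvd_add)
  then have gm2: "g dvd m^2" by simp
  have "coprime g m" using c gN by (meson coprime_commute coprime_divisors dvd_refl)
  then have "coprime g (m^2)" by simp
  then have "is_unit g" using coprime_common_divisor[of g "m^2" g] gm2 by simp
  then show ?thesis unfolding g_def using is_unit_gcd by blast
qed

lemma FF_mod:
  assumes "q * W \<noteq> 0"
  shows "FF W b q a (m mod (q * W)) = FF W b q a m"
  unfolding FF_def
proof (rule ee_cong[OF _ assms])
  have "[(m mod (q * W))^2 = m^2] (mod (q * W))"
    by (intro cong_pow) (simp add: cong_def)
  then show "[((m mod (q * W))\<^sup>2 - b) * a = (m\<^sup>2 - b) * a] (mod q * W)"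
    by (intro cong_mult cong_diff) auto
qed

lemma term_id:
  fixes W q h l b a :: int
  assumes W: "W \<noteq> 0" and q: "q \<noteq> 0"
  shows "ee (of_int ((h^2 - b) * a) / of_int (q * W)) * ee (of_int ((W * l^2 + 2 * h * l) * a) / of_int q)
         = FF W b q a (W * l + h)"
proof -
  have e1: "((W * l + h)^2 - b) * a = (h^2 - b) * a + W * ((W * l^2 + 2 * h * l) * a)"
    by (simp add: power2_eq_square algebra_simps)
  have "(of_int (((W * l + h)^2 - b) * a) / of_int (q * W) :: real)
      = of_int ((h^2 - b) * a) / of_int (q * W) + of_int (W * ((W * l^2 + 2 * h * l) * a)) / of_int (q * W)"
    unfolding e1 by (simp add: add_divide_distrib)
  also have "(of_int (W * ((W * l^2 + 2 * h * l) * a)) / of_int (q * W) :: real)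
      = of_int ((W * l^2 + 2 * h * l) * a) / of_int q"
    using W q by (simp add: field_simps)
  finally show ?thesis unfolding FF_def by (simp add: ee_add)
qed

lemma Ssum_FF:
  assumes "W \<noteq> 0" "q \<noteq> 0"
  shows "Ssum W b q a = (1 / of_nat (card (Hset W b))) *
     (\<Sum>h\<in>Hset W b. \<Sum>l\<in>LL W q h. FF W b q a (W * l + h))"
proof -
  have "\<And>h. ee (of_int ((h^2 - b) * a) / of_int (q * W)) *
        (\<Sum>l\<in>{l\<in>{1..q}. gcd (W * l + h) (q * W) = 1}. ee (of_int ((W * l^2 + 2 * h * l) * a) / of_int q))
      = (\<Sum>l\<in>LL W q h. FF W b q a (W * l + h))"
    unfolding LL_def by (simp only: sum_distrib_left term_id[OF assms])
  then show ?thesis unfolding Ssum_def by (simp only:)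
qed

lemma Hset_props:
  assumes W: "W > 1" and h: "h \<in> Hset W b"
  shows "1 \<le> h" "h < W" "coprime h W" "[h^2 = b] (mod W)"
proof -
  show "1 \<le> h" "coprime h W" "[h^2 = b] (mod W)" using h unfolding Hset_def by auto
  have "h \<le> W" using h unfolding Hset_def by auto
  moreover have "h \<noteq> W"
  proof
    assume "h = W"
    then have "coprime W W" using \<open>coprime h W\<close> by simp
    then show False using W by simp
  qed
  ultimately show "h < W" by simp
qed

lemma m_form:
  fixes W q b a :: int
  assumes W: "W > 1" and q: "q > 0"
  shows "(\<Sum>h\<in>Hset W b. \<Sum>l\<in>LL W q h. FF W b q a (W * l + h))
       = (\<Sum>m\<in>{m\<in>{0..<q * W}. coprime m (q * W) \<and> [m^2 = b] (mod W)}. FF W b q a m)"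
proof -
  define N where "N = q * W"
  have N: "N > 0" unfolding N_def using W q by simp
  have WN: "W dvd N" unfolding N_def by simp
  define M where "M = {m\<in>{0..<N}. coprime m N \<and> [m^2 = b] (mod W)}"
  define S where "S = Sigma (Hset W b) (LL W q)"
  define \<phi> where "\<phi> = (\<lambda>(h, l). (W * l + h) mod N)"
  define \<psi> where "\<psi> = (\<lambda>m. (m mod W, ((m div W - 1) mod q) + 1))"
  have finH: "finite (Hset W b)" unfolding Hset_def by (rule finite_subset[of _ "{1..W}"]) auto
  have finL: "finite (LL W q h)" for h unfolding LL_def by (rule finite_subset[of _ "{1..q}"]) auto
  have phi_cong: "(W * l + h) mod N mod W = h" if "h \<in> Hset W b" for h l
  proof -
    have "(W * l + h) mod N mod W = (W * l + h) mod W" using WN by (rule mod_mod_cancel)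
    also have "\<dots> = h mod W" by simp
    also have "\<dots> = h" using Hset_props[OF W that] by simp
    finally show ?thesis .
  qed
  have bij: "bij_betw \<phi> S M"
  proof (rule bij_betw_byWitness[where f'=\<psi>])
    show "\<forall>x\<in>S. \<psi> (\<phi> x) = x"
    proof
      fix x assume "x \<in> S"
      then obtain h l where x: "x = (h, l)" and h: "h \<in> Hset W b" and l: "l \<in> LL W q h"
        unfolding S_def by auto
      have l1: "1 \<le> l" "l \<le> q" using l unfolding LL_def by auto
      have hp: "1 \<le> h" "h < W" using Hset_props[OF W h] by auto
      define m where "m = (W * l + h) mod N"
      define t where "t = (W * l + h) div N"
      have "W * l + h = N * t + m" unfolding m_def t_def by simp
      then have m_eq: "m = h + W * (l - q * t)" unfolding N_def by (simp add: algebra_simps)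
      have "m div W = (h + W * (l - q * t)) div W" using m_eq by simp
      also have "\<dots> = h div W + (l - q * t)" using W by simp
      also have "\<dots> = l - q * t" using hp by simp
      finally have md: "m div W = l - q * t" .
      have "((m div W - 1) mod q) + 1 = ((l - 1) + q * (- t)) mod q + 1" unfolding md by (simp add: algebra_simps)
      also have "\<dots> = (l - 1) mod q + 1" by (simp only: mod_mult_self2)
      also have "\<dots> = l" using l1 by simp
      finally have "((m div W - 1) mod q) + 1 = l" .
      moreover have "m mod W = h" unfolding m_def using phi_cong[OF h] .
      ultimately show "\<psi> (\<phi> x) = x" unfolding x \<phi>_def \<psi>_def m_def by simp
    qed
    show "\<forall>m\<in>M. \<phi> (\<psi> m) = m"
    proof
      fix m assume "m \<in> M"
      then have m: "0 \<le> m" "m < N" unfolding M_def by auto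
      define k where "k = m div W"
      have "[((k - 1) mod q) + 1 = k] (mod q)"
        unfolding cong_def by (metis add.commute diff_add_cancel mod_add_right_eq)
      then have "q dvd ((k - 1) mod q + 1) - k" by (simp add: cong_iff_dvd_diff)
      then have "q * W dvd W * (((k - 1) mod q + 1) - k)" by (simp add: mult.commute mult_dvd_mono)
      then have "N dvd (W * ((k - 1) mod q + 1) + m mod W) - m"
        unfolding N_def k_def by (metis (no_types, lifting) add_diff_cancel_right' diff_diff_eq2
              div_mult_mod_eq mult.commute right_diff_distrib)
      then have "[W * ((k - 1) mod q + 1) + m mod W = m] (mod N)" by (simp add: cong_iff_dvd_diff)
      then have "(W * ((k - 1) mod q + 1) + m mod W) mod N = m mod N" by (simp add: cong_def)
      also have "\<dots> = m" using m by simp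
      finally show "\<phi> (\<psi> m) = m" unfolding \<phi>_def \<psi>_def k_def by simp
    qed
    show "\<phi> ` S \<subseteq> M"
    proof
      fix y assume "y \<in> \<phi> ` S"
      then obtain h l where h: "h \<in> Hset W b" and l: "l \<in> LL W q h" and y: "y = (W * l + h) mod N"
        unfolding S_def \<phi>_def by auto
      have "gcd (W * l + h) N = 1" using l unfolding LL_def N_def by auto
      then have c: "coprime (W * l + h) N" by (simp add: coprime_iff_gcd_eq_1)
      have "coprime y N" unfolding y using c N by (simp add: coprime_mod_left_iff)
      moreover have "[y^2 = b] (mod W)"
      proof -
        have "[y = h] (mod W)" unfolding cong_def y using phi_cong[OF h] Hset_props[OF W h] by simp
        then have "[y^2 = h^2] (mod W)" by (rule cong_pow)
        then show ?thesis using Hset_props(4)[OF W h] by (rule cong_trans)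
      qed
      moreover have "0 \<le> y" "y < N" unfolding y using N by auto
      ultimately show "y \<in> M" unfolding M_def by simp
    qed
    show "\<psi> ` M \<subseteq> S"
    proof
      fix x assume "x \<in> \<psi> ` M"
      then obtain m where m: "m \<in> M" and x: "x = \<psi> m" by auto
      have m0: "0 \<le> m" "m < N" and cm: "coprime m N" and mb: "[m^2 = b] (mod W)"
        using m unfolding M_def by auto
      have cmW: "coprime m W" using cm unfolding N_def by simp
      define h where "h = m mod W"
      define l where "l = ((m div W - 1) mod q) + 1"
      have chW: "coprime h W" unfolding h_def using cmW W by (simp add: coprime_mod_left_iff)
      have "h \<noteq> 0"
      proof
        assume "h = 0" then have "coprime 0 W" using chW by simp
        then show False using W by simp
      qed
      moreover have "0 \<le> h" "h < W" unfolding h_def using W by simp_all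
      ultimately have h1: "1 \<le> h" "h \<le> W" by simp_all
      have hb: "[h^2 = b] (mod W)"
      proof -
        have "[h = m] (mod W)" unfolding h_def cong_def by simp
        then have "[h^2 = m^2] (mod W)" by (rule cong_pow)
        then show ?thesis using mb by (rule cong_trans)
      qed
      have hH: "h \<in> Hset W b" unfolding Hset_def using h1 chW hb by simp
      have "0 \<le> (m div W - 1) mod q" "(m div W - 1) mod q < q" using q by simp_all
      then have l1: "1 \<le> l" "l \<le> q" unfolding l_def by simp_all
      have phi_m: "\<phi> (h, l) = m" using \<open>\<forall>m\<in>M. \<phi> (\<psi> m) = m\<close> m unfolding \<psi>_def h_def l_def by auto
      have "coprime ((W * l + h) mod N) N" using phi_m cm unfolding \<phi>_def by simp
      then have "coprime (W * l + h) N" using N by (simp add: coprime_mod_left_iff)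
      then have "gcd (W * l + h) (q * W) = 1" unfolding N_def by (simp add: coprime_iff_gcd_eq_1)
      then have lL: "l \<in> LL W q h" unfolding LL_def using l1 by simp
      show "x \<in> S" unfolding x S_def \<psi>_def using hH lL unfolding h_def l_def by simp
    qed
  qed
  have "(\<Sum>h\<in>Hset W b. \<Sum>l\<in>LL W q h. FF W b q a (W * l + h)) = (\<Sum>(h, l)\<in>S. FF W b q a (W * l + h))"
    unfolding S_def by (rule sum.Sigma[OF finH]) (simp add: finL)
  also have "\<dots> = (\<Sum>x\<in>S. FF W b q a (\<phi> x))"
    unfolding \<phi>_def N_def using W q
    by (intro sum.cong refl) (auto simp: FF_mod)
  also have "\<dots> = (\<Sum>m\<in>M. FF W b q a m)"
    by (rule sum.reindex_bij_betw[OF bij])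
  finally show ?thesis unfolding M_def N_def .
qed

lemma zero_gen:
  fixes W q b a s D k :: int
  assumes W: "W > 1" and q: "q > 0" and Ns: "q * W dvd s^2" and Ws: "W dvd 2 * s"
    and sD: "2 * s * D = q * W * k" and D: "D > 0"
    and nd: "\<And>m. coprime m (q * W) \<Longrightarrow> \<not> D dvd k * m * a"
  shows "(\<Sum>m\<in>{m\<in>{0..<q * W}. coprime m (q * W) \<and> [m^2 = b] (mod W)}. FF W b q a m) = 0"
proof -
  define N where "N = q * W"
  have N: "N > 0" unfolding N_def using W q by simp
  have WN: "W dvd N" unfolding N_def by simp
  obtain u where u: "s^2 = N * u" using Ns unfolding N_def by auto
  let ?P = "\<lambda>m. coprime m N \<and> [m^2 = b] (mod W)"
  have "(\<Sum>m\<in>{m\<in>{0..<N}. ?P m}. FF W b q a m) = 0"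
  proof (rule shift_zero[where s=s and D=D and r="\<lambda>m. k * m * a"])
    show "N > 0" by (rule N)
    show "D > 0" by (rule D)
    show "?P ((m + j * s) mod N)" if "?P m" for m j
    proof -
      have "N dvd (j * s)^2" using u by (simp add: power_mult_distrib)
      then have "coprime (m + j * s) N" using that coprime_shift by blast
      then have c: "coprime ((m + j * s) mod N) N" using N by (simp add: coprime_mod_left_iff)
      have "[(m + j * s) mod N = m + j * s] (mod W)"
        unfolding cong_def using WN by (simp add: mod_mod_cancel)
      then have c1: "[((m + j * s) mod N)^2 = (m + j * s)^2] (mod W)" by (rule cong_pow)
      have "W dvd (m + j * s)^2 - m^2"
      proof -
        have e: "(m + j * s)^2 - m^2 = (j * m) * (2 * s) + j^2 * s^2"
          by (simp add: power2_eq_square algebra_simps)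
        have "W dvd s^2" using WN u by simp
        then show ?thesis unfolding e using Ws by simp
      qed
      then have "[(m + j * s)^2 = m^2] (mod W)" by (simp add: cong_iff_dvd_diff)
      then have "[((m + j * s) mod N)^2 = b] (mod W)" using c1 that by (meson cong_trans)
      then show ?thesis using c by simp
    qed
    show "FF W b q a (m mod N) = FF W b q a m" for m
      unfolding N_def by (rule FF_mod) (use W q in simp)
    show "FF W b q a (m + j * s) = FF W b q a m * ee (of_int (j * (k * m * a)) / of_int D)" for m j
    proof -
      define X where "X = ((m + j * s)^2 - b) * a"
      have Xe: "X = (m^2 - b) * a + (j * m * a) * (2 * s) + N * (j^2 * a * u)"
        unfolding X_def using u by (simp add: power2_eq_square algebra_simps)
      have "X * D = (m^2 - b) * a * D + (j * (k * m * a)) * N + N * D * (j^2 * a * u)"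
        unfolding Xe using sD unfolding N_def by (simp add: algebra_simps)
      then have ie: "real_of_int X * of_int D = of_int ((m^2 - b) * a) * of_int D
          + of_int (j * (k * m * a)) * of_int N + of_int N * of_int D * of_int (j^2 * a * u)"
        by (metis of_int_add of_int_mult)
      have arg: "real_of_int X / of_int N = of_int ((m^2 - b) * a) / of_int N + of_int (j * (k * m * a)) / of_int D
          + of_int (j^2 * a * u)"
        using N D ie by (simp add: field_simps)
      have "FF W b q a (m + j * s) = ee (real_of_int X / of_int N)" unfolding FF_def X_def N_def ..
      also have "\<dots> = ee (of_int ((m^2 - b) * a) / of_int N + of_int (j * (k * m * a)) / of_int D
          + of_int (j^2 * a * u))" by (simp only: arg)
      also have "\<dots> = ee (of_int ((m^2 - b) * a) / of_int N) * ee (of_int (j * (k * m * a)) / of_int D)"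
        by (simp only: ee_add ee_int mult_1_right)
      also have "ee (of_int ((m^2 - b) * a) / of_int N) = FF W b q a m" unfolding FF_def N_def ..
      finally show ?thesis .
    qed
    show "\<not> D dvd k * m * a" if "?P m" for m using nd that unfolding N_def by simp
  qed
  then show ?thesis unfolding N_def .
qed

lemma Ssum_zero_of:
  assumes W: "W > 1" and q: "q > 0"
    and z: "(\<Sum>m\<in>{m\<in>{0..<q * W}. coprime m (q * W) \<and> [m^2 = b] (mod W)}. FF W b q a m) = 0"
  shows "Ssum W b q a = 0"
  using W q z by (simp add: Ssum_FF m_form)

lemma Ssum_zero_even:
  fixes W q b a :: int
  assumes W: "W > 1" and W8: "8 dvd W" and q: "q > 0" and eq: "even q" and cq: "coprime a q"
  shows "Ssum W b q a = 0"
proof (rule Ssum_zero_of[OF W q])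
  obtain q' where q': "q = 2 * q'" using eq by auto
  obtain w' where w': "W = 8 * w'" using W8 by auto
  show "(\<Sum>m\<in>{m\<in>{0..<q * W}. coprime m (q * W) \<and> [m^2 = b] (mod W)}. FF W b q a m) = 0"
  proof (rule zero_gen[OF W q, where s="4 * q' * w'" and D=2 and k=1])
    show "q * W dvd (4 * q' * w')^2" unfolding q' w'
      by (rule dvdI[where k="q' * w'"]) (simp add: power2_eq_square algebra_simps)
    show "W dvd 2 * (4 * q' * w')" unfolding w' by (rule dvdI[where k="q'"]) (simp add: algebra_simps)
    show "2 * (4 * q' * w') * 2 = q * W * 1" unfolding q' w' by simp
    show "(2::int) > 0" by simp
    show "\<not> 2 dvd 1 * m * a" if "coprime m (q * W)" for m
    proof -
      have "2 dvd q * W" using eq by simp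
      have "odd m"
      proof
        assume "even m"
        then have "is_unit (2::int)" using that coprime_common_divisor \<open>2 dvd q * W\<close> by blast
        then show False by simp
      qed
      moreover have "odd a"
      proof
        assume "even a"
        then have "is_unit (2::int)" using cq coprime_common_divisor eq by blast
        then show False by simp
      qed
      ultimately show ?thesis by simp
    qed
  qed
qed

lemma Ssum_zero_oddp:
  fixes W q b a p :: int
  assumes W: "W > 1" and q: "q > 0" and p: "prime p" "odd p" "p dvd q" "p dvd W" and cq: "coprime a q"
  shows "Ssum W b q a = 0"
proof (rule Ssum_zero_of[OF W q])
  obtain q' where q': "q = p * q'" using p by auto
  obtain w' where w': "W = p * w'" using p by auto
  show "(\<Sum>m\<in>{m\<in>{0..<q * W}. coprime m (q * W) \<and> [m^2 = b] (mod W)}. FF W b q a m) = 0"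
  proof (rule zero_gen[OF W q, where s="q' * W" and D=p and k=2])
    show "q * W dvd (q' * W)^2" unfolding q'
      by (rule dvdI[where k="q' * w'"]) (simp add: power2_eq_square algebra_simps w')
    show "W dvd 2 * (q' * W)" by simp
    show "2 * (q' * W) * p = q * W * 2" unfolding q' by (simp add: algebra_simps)
    show "p > 0" using p(1) by (simp add: prime_gt_0_int)
    show "\<not> p dvd 2 * m * a" if "coprime m (q * W)" for m
    proof
      assume "p dvd 2 * m * a"
      then have "p dvd 2 \<or> p dvd m \<or> p dvd a" using p(1) by (simp add: prime_dvd_mult_iff)
      moreover have "\<not> p dvd 2" using p(1) p(2) zdvd_imp_le[of p 2] prime_ge_2_int[of p] by auto
      moreover have "\<not> p dvd m"
      proof
        assume "p dvd m"
        moreover have "p dvd q * W" using p by simp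
        ultimately have "is_unit p" using that coprime_common_divisor by blast
        then show False using p(1) not_prime_unit by blast
      qed
      moreover have "\<not> p dvd a"
      proof
        assume "p dvd a"
        then have "is_unit p" using cq p(3) coprime_common_divisor by blast
        then show False using p(1) not_prime_unit by blast
      qed
      ultimately show False by blast
    qed
  qed
qed

lemma rep1:
  fixes x l q :: int
  assumes "[x = l] (mod q)" "1 \<le> l" "l \<le> q"
  shows "(x - 1) mod q + 1 = l"
proof -
  have "[x - 1 = l - 1] (mod q)" using assms(1) by (intro cong_diff) auto
  then have "(x - 1) mod q = (l - 1) mod q" by (simp add: cong_def)
  also have "\<dots> = l - 1" using assms(2,3) by simp
  finally show ?thesis by simp
qed

lemma per_h:
  fixes W q b a Wi h :: int
  assumes W: "W > 1" and q: "q > 0" and Wi: "[W * Wi = 1] (mod q)" and h: "h \<in> Hset W b"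
  shows "(\<Sum>l\<in>LL W q h. FF W b q a (W * l + h))
       = (\<Sum>x\<in>{x\<in>{0..<q}. coprime x q}. ee (of_int (a * Wi * (x^2 - b)) / of_int q))"
proof -
  define X where "X = {x\<in>{0..<q}. coprime x q}"
  define \<phi> where "\<phi> = (\<lambda>l. (W * l + h) mod q)"
  define \<psi> where "\<psi> = (\<lambda>x. (Wi * (x - h) - 1) mod q + 1)"
  have hp: "1 \<le> h" "h < W" "coprime h W" "[h^2 = b] (mod W)" using Hset_props[OF W h] by auto
  have psi_cong: "[\<psi> x = Wi * (x - h)] (mod q)" for x
    unfolding \<psi>_def cong_def by (metis diff_add_cancel mod_add_left_eq)
  have phipsi: "(W * \<psi> x + h) mod q = x mod q" for x
  proof -
    have "[W * \<psi> x + h = W * (Wi * (x - h)) + h] (mod q)"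
      using psi_cong by (intro cong_add cong_mult) auto
    moreover have "[W * (Wi * (x - h)) + h = 1 * (x - h) + h] (mod q)"
    proof -
      have "[(W * Wi) * (x - h) = 1 * (x - h)] (mod q)" using Wi by (intro cong_mult) auto
      then show ?thesis by (intro cong_add) (auto simp: mult.assoc)
    qed
    ultimately have "[W * \<psi> x + h = x] (mod q)" by (auto elim: cong_trans)
    then show ?thesis by (simp add: cong_def)
  qed
  have bij: "bij_betw \<phi> (LL W q h) X"
  proof (rule bij_betw_byWitness[where f'=\<psi>])
    show "\<forall>l\<in>LL W q h. \<psi> (\<phi> l) = l"
    proof
      fix l assume l: "l \<in> LL W q h"
      have l1: "1 \<le> l" "l \<le> q" using l unfolding LL_def by auto
      have "[Wi * (\<phi> l - h) = Wi * ((W * l + h) - h)] (mod q)"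
        unfolding \<phi>_def by (intro cong_mult cong_diff) (auto simp: cong_def)
      also have "Wi * ((W * l + h) - h) = (W * Wi) * l" by (simp add: algebra_simps)
      also have "[(W * Wi) * l = 1 * l] (mod q)" using Wi by (intro cong_mult) auto
      finally have "[Wi * (\<phi> l - h) = l] (mod q)" by simp
      then show "\<psi> (\<phi> l) = l" unfolding \<psi>_def by (rule rep1) (use l1 in auto)
    qed
    show "\<forall>x\<in>X. \<phi> (\<psi> x) = x"
    proof
      fix x assume "x \<in> X"
      then have "0 \<le> x" "x < q" unfolding X_def by auto
      then show "\<phi> (\<psi> x) = x" unfolding \<phi>_def using phipsi[of x] by simp
    qed
    show "\<phi> ` LL W q h \<subseteq> X"
    proof
      fix y assume "y \<in> \<phi> ` LL W q h"
      then obtain l where l: "l \<in> LL W q h" and y: "y = (W * l + h) mod q" unfolding \<phi>_def by auto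
      have "gcd (W * l + h) (q * W) = 1" using l unfolding LL_def by auto
      then have "coprime (W * l + h) (q * W)" by (simp add: coprime_iff_gcd_eq_1)
      then have "coprime (W * l + h) q" by simp
      then have "coprime y q" unfolding y using q by (simp add: coprime_mod_left_iff)
      then show "y \<in> X" unfolding X_def y using q by simp
    qed
    show "\<psi> ` X \<subseteq> LL W q h"
    proof
      fix l assume "l \<in> \<psi> ` X"
      then obtain x where x: "x \<in> X" and l: "l = \<psi> x" by auto
      have x0: "0 \<le> x" "x < q" "coprime x q" using x unfolding X_def by auto
      have "0 \<le> (Wi * (x - h) - 1) mod q" "(Wi * (x - h) - 1) mod q < q" using q by simp_all
      then have l1: "1 \<le> l" "l \<le> q" unfolding l \<psi>_def by simp_all
      have "(W * l + h) mod q = x" using phipsi[of x] x0 unfolding l by simp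
      then have c1: "coprime (W * l + h) q" using x0 q by (metis coprime_mod_left_iff less_irrefl)
      have "(W * l + h) mod W = h mod W" by simp
      then have c2: "coprime (W * l + h) W" using hp(3) W
        by (metis coprime_mod_left_iff less_irrefl zero_less_one less_trans)
      have "coprime (W * l + h) (q * W)" using c1 c2 by simp
      then have "gcd (W * l + h) (q * W) = 1" by (simp add: coprime_iff_gcd_eq_1)
      then show "l \<in> LL W q h" unfolding LL_def using l1 by simp
    qed
  qed
  have termeq: "FF W b q a (W * l + h) = ee (of_int (a * Wi * ((\<phi> l)^2 - b)) / of_int q)" for l
  proof -
    define y where "y = W * l + h"
    have "[y = h] (mod W)" unfolding y_def cong_def by simp
    then have "[y^2 = h^2] (mod W)" by (rule cong_pow)
    then have "[y^2 = b] (mod W)" using hp(4) by (rule cong_trans)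
    then have "W dvd y^2 - b" by (simp add: cong_iff_dvd_diff)
    then obtain K where K: "y^2 - b = W * K" by auto
    have "(of_int ((y^2 - b) * a) / of_int (q * W) :: real) = of_int (K * a) / of_int q"
      unfolding K using W q by (simp add: field_simps)
    then have e1: "FF W b q a y = ee (of_int (K * a) / of_int q)" unfolding FF_def by simp
    have "[a * Wi * ((\<phi> l)^2 - b) = a * Wi * (y^2 - b)] (mod q)"
    proof -
      have "[\<phi> l = y] (mod q)" unfolding \<phi>_def y_def cong_def by simp
      then have "[(\<phi> l)^2 = y^2] (mod q)" by (rule cong_pow)
      then show ?thesis by (intro cong_mult cong_diff) auto
    qed
    also have "a * Wi * (y^2 - b) = a * K * (W * Wi)" unfolding K by (simp add: algebra_simps)
    also have "[a * K * (W * Wi) = a * K * 1] (mod q)" using Wi by (intro cong_mult) auto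
    finally have "[K * a = a * Wi * ((\<phi> l)^2 - b)] (mod q)" by (simp add: cong_sym mult.commute)
    then have "ee (of_int (K * a) / of_int q) = ee (of_int (a * Wi * ((\<phi> l)^2 - b)) / of_int q)"
      using q by (intro ee_cong) auto
    then show ?thesis using e1 unfolding y_def by simp
  qed
  have "(\<Sum>l\<in>LL W q h. FF W b q a (W * l + h)) = (\<Sum>l\<in>LL W q h. ee (of_int (a * Wi * ((\<phi> l)^2 - b)) / of_int q))"
    by (rule sum.cong[OF refl]) (rule termeq)
  also have "\<dots> = (\<Sum>x\<in>X. ee (of_int (a * Wi * (x^2 - b)) / of_int q))"
    by (rule sum.reindex_bij_betw[OF bij, of "\<lambda>x. ee (of_int (a * Wi * (x^2 - b)) / of_int q)"])
  finally show ?thesis unfolding X_def .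
qed

lemma Hset_nonempty:
  assumes W: "W > 1" and b: "b \<in> Zset W"
  shows "Hset W b \<noteq> {}"
proof -
  from b obtain h0 where h0: "[h0^2 = b] (mod W)" and cb: "coprime b W" unfolding Zset_def by auto
  define h where "h = h0 mod W"
  have "[h = h0] (mod W)" unfolding h_def cong_def by simp
  then have "[h^2 = h0^2] (mod W)" by (rule cong_pow)
  then have hb: "[h^2 = b] (mod W)" using h0 by (rule cong_trans)
  then have "(h^2) mod W = b mod W" by (simp add: cong_def)
  then have "coprime ((h^2) mod W) W" using cb W by (simp add: coprime_mod_left_iff)
  then have "coprime (h^2) W" using W by (simp add: coprime_mod_left_iff)
  then have ch: "coprime h W" by simp
  have "h \<noteq> 0"
  proof
    assume "h = 0" then have "coprime 0 W" using ch by simp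
    then show False using W by simp
  qed
  moreover have "0 \<le> h" "h < W" unfolding h_def using W by simp_all
  ultimately have "h \<in> Hset W b" unfolding Hset_def using ch hb by simp
  then show ?thesis by auto
qed

lemma Ssum_coprime:
  fixes W q b a Wi :: int
  assumes W: "W > 1" and q: "q > 0" and Wi: "[W * Wi = 1] (mod q)" and b: "b \<in> Zset W"
  shows "Ssum W b q a = (\<Sum>x\<in>{x\<in>{0..<q}. coprime x q}. ee (of_int (a * Wi * (x^2 - b)) / of_int q))"
proof -
  define V where "V = (\<Sum>x\<in>{x\<in>{0..<q}. coprime x q}. ee (of_int (a * Wi * (x^2 - b)) / of_int q))"
  have finH: "finite (Hset W b)" unfolding Hset_def by (rule finite_subset[of _ "{1..W}"]) auto
  have H0: "card (Hset W b) \<noteq> 0" using finH Hset_nonempty[OF W b] by simp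
  have "Ssum W b q a = (1 / of_nat (card (Hset W b))) * (\<Sum>h\<in>Hset W b. \<Sum>l\<in>LL W q h. FF W b q a (W * l + h))"
    using W q by (intro Ssum_FF) auto
  also have "(\<Sum>h\<in>Hset W b. \<Sum>l\<in>LL W q h. FF W b q a (W * l + h)) = (\<Sum>h\<in>Hset W b. V)"
    unfolding V_def by (rule sum.cong[OF refl]) (rule per_h[OF W q Wi])
  also have "\<dots> = of_nat (card (Hset W b)) * V" by simp
  finally show ?thesis using H0 unfolding V_def by simp
qed

lemma V_bound:
  fixes q c b :: int
  assumes q: "q > 0" and oq: "odd q" and cq: "coprime c q"
  shows "cmod (\<Sum>x\<in>{x\<in>{0..<q}. coprime x q}. ee (of_int (c * (x^2 - b)) / of_int q))
       \<le> 2 ^ card {p. prime p \<and> p dvd nat q} * sqrt (real (nat q))"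
proof -
  define n where "n = nat q"
  have qn: "q = int n" unfolding n_def using q by simp
  have n0: "n > 0" using q qn by simp
  have on: "odd n" using oq qn by simp
  have cn: "coprime c (int n)" using cq qn by simp
  have splt: "ee (of_int (c * (x^2 - b)) / of_int q) = ee (- (of_int (c * b) / of_int q)) * ee (of_int (c * x^2) / of_int q)" for x
  proof -
    have "(of_int (c * (x^2 - b)) / of_int q :: real) = - (of_int (c * b) / of_int q) + of_int (c * x^2) / of_int q"
      by (simp add: algebra_simps diff_divide_distrib)
    then show ?thesis by (simp only: ee_add)
  qed
  have setq: "{x\<in>{0..<q}. coprime x q} = int ` {x. x < n \<and> coprime x n}"
  proof
    show "{x\<in>{0..<q}. coprime x q} \<subseteq> int ` {x. x < n \<and> coprime x n}"
    proof
      fix x assume x: "x \<in> {x\<in>{0..<q}. coprime x q}"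
      then have "x = int (nat x)" by simp
      moreover have "nat x < n" "coprime (nat x) n"
        using x qn by (auto simp flip: coprime_int_iff)
      ultimately show "x \<in> int ` {x. x < n \<and> coprime x n}" by blast
    qed
    show "int ` {x. x < n \<and> coprime x n} \<subseteq> {x\<in>{0..<q}. coprime x q}"
      using qn by (auto simp: coprime_int_iff)
  qed
  have "(\<Sum>x\<in>{x\<in>{0..<q}. coprime x q}. ee (of_int (c * (x^2 - b)) / of_int q))
      = ee (- (of_int (c * b) / of_int q)) * (\<Sum>x\<in>{x\<in>{0..<q}. coprime x q}. ee (of_int (c * x^2) / of_int q))"
    by (simp only: splt sum_distrib_left)
  also have "(\<Sum>x\<in>{x\<in>{0..<q}. coprime x q}. ee (of_int (c * x^2) / of_int q))
      = (\<Sum>x\<in>{x. x < n \<and> coprime x n}. ee (of_int (c * int x ^ 2) / of_nat n))"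
    unfolding setq by (subst sum.reindex) (auto simp: qn)
  finally have "cmod (\<Sum>x\<in>{x\<in>{0..<q}. coprime x q}. ee (of_int (c * (x^2 - b)) / of_int q))
      = cmod (\<Sum>x\<in>{x. x < n \<and> coprime x n}. ee (of_int (c * int x ^ 2) / of_nat n))"
    by (simp add: norm_mult)
  also have "\<dots> \<le> 2 ^ card {p. prime p \<and> p dvd n} * sqrt n"
    by (rule unit_sum_bound[OF n0 on cn])
  finally show ?thesis unfolding n_def .
qed

lemma Ssum_zero_noncop:
  fixes W q b a :: int
  assumes W: "W > 1" and W8: "8 dvd W" and q: "q > 0" and cq: "coprime a q" and nc: "\<not> coprime q W"
  shows "Ssum W b q a = 0"
proof (cases "even q")
  case True
  then show ?thesis by (rule Ssum_zero_even[OF W W8 q _ cq])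
next
  case False
  have "gcd q W \<noteq> 0" using q by simp
  moreover have "\<not> is_unit (gcd q W)" using nc is_unit_gcd by blast
  ultimately obtain p where p: "p dvd gcd q W" "prime p" using prime_divisor_exists by blast
  then have pq: "p dvd q" and pW: "p dvd W" by auto
  have "odd p" using pq False by (auto elim: dvd_trans)
  then show ?thesis by (rule Ssum_zero_oddp[OF W q p(2) _ pq pW cq])
qed

lemma WW_props: "WW w > 1" "8 dvd WW w"
proof -
  have "(\<Prod>p\<in>{p::nat. prime p \<and> 2 < p \<and> real p < w}. int p) > 0"
    by (rule prod_pos) (auto simp: prime_gt_0_nat)
  then show "WW w > 1" "8 dvd WW w" unfolding WW_def by simp_all
qed

theorem corollary4p3:
  shows "(\<forall>\<epsilon>>0. \<exists>C::real. \<forall>(w::real) (b::int) (q::int) (a::int).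
            w \<ge> 3 \<longrightarrow> b \<in> Zset (WW w) \<longrightarrow> q \<ge> 1 \<longrightarrow> coprime a q \<longrightarrow>
            norm (Ssum (WW w) b q a) \<le> C * real_of_int q powr (1/2 + \<epsilon>))
       \<and> (\<forall>(w::real) (b::int) (q::int) (a::int).
            w \<ge> 3 \<longrightarrow> b \<in> Zset (WW w) \<longrightarrow> q \<ge> 1 \<longrightarrow> coprime a q \<longrightarrow>
            (\<not> gcd q (WW w) dvd 2 \<or> q = 2) \<longrightarrow> Ssum (WW w) b q a = 0)"
proof (intro conjI allI impI)
  fix w :: real and b q a :: int
  assume b: "b \<in> Zset (WW w)" and q: "q \<ge> 1" and cq: "coprime a q"
    and h: "\<not> gcd q (WW w) dvd 2 \<or> q = 2"
  show "Ssum (WW w) b q a = 0"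
  proof (cases "q = 2")
    case True
    show ?thesis by (rule Ssum_zero_even[OF WW_props(1)[of w] WW_props(2)[of w]]) (use q cq True in auto)
  next
    case False
    then have "\<not> gcd q (WW w) dvd 2" using h by simp
    then have "\<not> coprime q (WW w)" by (auto simp: coprime_iff_gcd_eq_1)
    then show ?thesis by (intro Ssum_zero_noncop[OF WW_props(1)[of w] WW_props(2)[of w]]) (use q cq in auto)
  qed
next
  fix \<epsilon> :: real assume e: "\<epsilon> > 0"
  obtain C where C: "C > 0" and Cb: "\<forall>q::nat. q > 0 \<longrightarrow> 2 ^ card {p. prime p \<and> p dvd q} \<le> C * real q powr \<epsilon>"
    using omega_bound[OF e] by blast
  show "\<exists>C::real. \<forall>(w::real) (b::int) (q::int) (a::int).
            w \<ge> 3 \<longrightarrow> b \<in> Zset (WW w) \<longrightarrow> q \<ge> 1 \<longrightarrow> coprime a q \<longrightarrow>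
            norm (Ssum (WW w) b q a) \<le> C * real_of_int q powr (1/2 + \<epsilon>)"
  proof (intro exI[of _ C] allI impI)
    fix w :: real and b q a :: int
    assume b: "b \<in> Zset (WW w)" and q: "q \<ge> 1" and cq: "coprime a q"
    define W where "W = WW w"
    have W: "W > 1" "8 dvd W" unfolding W_def using WW_props by auto
    have q0: "q > 0" using q by simp
    have rhs0: "0 \<le> C * real_of_int q powr (1/2 + \<epsilon>)" using C by simp
    show "norm (Ssum (WW w) b q a) \<le> C * real_of_int q powr (1/2 + \<epsilon>)"
    proof (cases "coprime q W")
      case False
      then have "Ssum W b q a = 0" using Ssum_zero_noncop[OF W(1) W(2) q0 cq] by simp
      then show ?thesis using rhs0 unfolding W_def by simp
    next
      case True
      obtain Wi where Wi: "[W * Wi = 1] (mod q)"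
        using cong_solve_coprime_int[of W q] True by (auto simp: coprime_commute)
      have oq: "odd q"
      proof
        assume "even q"
        moreover have "(2::int) dvd W" using W(2) by (rule dvd_trans[rotated]) simp
        ultimately have "is_unit (2::int)" using True coprime_common_divisor by blast
        then show False by simp
      qed
      have cWi: "coprime Wi q"
        using Wi coprime_iff_invertible_int[of Wi q] by (auto simp: mult.commute)
      have cc: "coprime (a * Wi) q" using cq cWi by simp
      have "Ssum W b q a = (\<Sum>x\<in>{x\<in>{0..<q}. coprime x q}. ee (of_int (a * Wi * (x^2 - b)) / of_int q))"
        using W(1) q0 Wi b unfolding W_def by (intro Ssum_coprime) auto
      then have "norm (Ssum W b q a) \<le> 2 ^ card {p. prime p \<and> p dvd nat q} * sqrt (real (nat q))"
        using V_bound[OF q0 oq cc, of b] by simp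
      also have "\<dots> \<le> (C * real (nat q) powr \<epsilon>) * sqrt (real (nat q))"
        using Cb[rule_format, of "nat q"] q0 by (intro mult_right_mono) simp_all
      also have "\<dots> = C * real_of_int q powr (1/2 + \<epsilon>)"
        using q0 by (simp add: powr_add powr_half_sqrt)
      finally show ?thesis unfolding W_def .
    qed
  qed
qed

end
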